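(* Let $X$ be a compact metric space whose metric $d$ is an ultrametric, i.e. $d(x,z)\le\max\{d(x,y),d(y,z)\}$ for all $x,y,z\in X$. If a continuous map $f\colon X\to X$ has the contractive shadowing property, then $CR(f)=\overline{Per(f)}$.
   Context: For $\delta>0$, a sequence $(x_i)_{i\ge0}$ is a $\delta$-pseudo orbit of $f$ if $d(f(x_i),x_{i+1})\le\delta$ for all $i\ge0$; it is $\epsilon$-shadowed by $x$ if $d(f^i(x),x_i)\le\epsilon$ for all $i\ge0$. $f$ has the contractive shadowing property if there are $0<L<1$ and $\delta_0>0$ such that for every $0<\delta\le\delta_0$, every $\delta$-pseudo orbit of $f$ is $L\delta$-shadowed by some point of $X$. A $\delta$-chain is a finite sequence $(x_i)_{i=0}^k$, $k\ge1$, with $d(f(x_i),x_{i+1})\le\delta$ for $0\le i\le k-1$; a $\delta$-cycle is a $\delta$-chain with $x_0=x_k$. $CR(f)$ is the set of $x\in X$ such that for every $\delta>0$ there is a $\delta$-cycle with $x_0=x_k=x$. $Per(f)=\bigcup_{i>0}\{x: f^i(x)=x\}$. *)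

theory Defs
  imports "HOL-Analysis.Analysis"
begin

text \<open>The space X is the whole (metric) type 'a; compactness is stated as compact UNIV.\<close>

definition ultrametric :: "'a::metric_space itself \<Rightarrow> bool" where
  "ultrametric _ \<longleftrightarrow> (\<forall>x y z::'a. dist x z \<le> max (dist x y) (dist y z))"

definition pseudo_orbit :: "('a::metric_space \<Rightarrow> 'a) \<Rightarrow> real \<Rightarrow> (nat \<Rightarrow> 'a) \<Rightarrow> bool" where
  "pseudo_orbit f \<delta> xs \<longleftrightarrow> (\<forall>i. dist (f (xs i)) (xs (Suc i)) \<le> \<delta>)"

definition shadows :: "('a::metric_space \<Rightarrow> 'a) \<Rightarrow> real \<Rightarrow> 'a \<Rightarrow> (nat \<Rightarrow> 'a) \<Rightarrow> bool" where
  "shadows f \<epsilon> x xs \<longleftrightarrow> (\<forall>i. dist ((f ^^ i) x) (xs i) \<le> \<epsilon>)"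

definition contractive_shadowing :: "('a::metric_space \<Rightarrow> 'a) \<Rightarrow> bool" where
  "contractive_shadowing f \<longleftrightarrow>
     (\<exists>L \<delta>0. 0 < L \<and> L < 1 \<and> 0 < \<delta>0 \<and>
        (\<forall>\<delta>. 0 < \<delta> \<and> \<delta> \<le> \<delta>0 \<longrightarrow>
           (\<forall>xs. pseudo_orbit f \<delta> xs \<longrightarrow> (\<exists>x. shadows f (L * \<delta>) x xs))))"

text \<open>A delta-chain (x_0,...,x_k), k \<ge> 1, represented by a function on nat restricted to {0..k}.\<close>
definition delta_chain :: "('a::metric_space \<Rightarrow> 'a) \<Rightarrow> real \<Rightarrow> (nat \<Rightarrow> 'a) \<Rightarrow> nat \<Rightarrow> bool" where
  "delta_chain f \<delta> xs k \<longleftrightarrow> 1 \<le> k \<and> (\<forall>i<k. dist (f (xs i)) (xs (Suc i)) \<le> \<delta>)"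

definition chain_recurrent_set :: "('a::metric_space \<Rightarrow> 'a) \<Rightarrow> 'a set" where
  "chain_recurrent_set f = {x. \<forall>\<delta>>0. \<exists>xs k. delta_chain f \<delta> xs k \<and> xs 0 = x \<and> xs k = x}"

definition periodic_points :: "('a \<Rightarrow> 'a) \<Rightarrow> 'a set" where
  "periodic_points f = (\<Union>i\<in>{i. i > 0}. {x. (f ^^ i) x = x})"

end

theory Submission
  imports Defs
begin

lemma um_le:
  fixes x y z :: "'a::metric_space"
  assumes "ultrametric TYPE('a)"
  shows "dist x z \<le> max (dist x y) (dist y z)"
  using assms unfolding ultrametric_def by blast

lemma chain_periodic_po:
  assumes "delta_chain f d xs k" "xs 0 = xs k"
  shows "pseudo_orbit f d (\<lambda>i. xs (i mod k))"
  unfolding pseudo_orbit_def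
proof
  fix i
  have k: "k \<ge> 1" "\<forall>i<k. dist (f (xs i)) (xs (Suc i)) \<le> d"
    using assms(1) unfolding delta_chain_def by auto
  have lt: "i mod k < k" using k by simp
  show "dist (f (xs (i mod k))) (xs (Suc i mod k)) \<le> d"
  proof (cases "Suc (i mod k) = k")
    case True
    then have "xs (Suc i mod k) = xs (Suc (i mod k))" using assms(2) by (simp add: mod_Suc)
    then show ?thesis using k lt by simp
  next
    case False
    then show ?thesis using k lt by (simp add: mod_Suc)
  qed
qed

lemma funpow_cont:
  fixes f :: "'a::topological_space \<Rightarrow> 'a"
  assumes "continuous_on UNIV f"
  shows "continuous_on UNIV (f ^^ n)"
proof (induction n)
  case 0
  have "(f ^^ 0) = (\<lambda>x. x)" by (rule ext) simp
  then show ?case by (simp add: continuous_on_id)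
next
  case (Suc n)
  have "continuous_on UNIV (f \<circ> (f ^^ n))"
    by (rule continuous_on_compose[OF Suc]) (use assms in \<open>auto intro: continuous_on_subset\<close>)
  then show ?case by simp
qed

lemma per_in_cr:
  assumes "x \<in> periodic_points f"
  shows "x \<in> chain_recurrent_set f"
proof -
  obtain i where i: "i > 0" "(f ^^ i) x = x" using assms unfolding periodic_points_def by auto
  show ?thesis unfolding chain_recurrent_set_def
  proof (intro CollectI allI impI)
    fix d :: real assume "d > 0"
    have "delta_chain f d (\<lambda>j. (f ^^ j) x) i" unfolding delta_chain_def using i \<open>d>0\<close> by auto
    then show "\<exists>xs k. delta_chain f d xs k \<and> xs 0 = x \<and> xs k = x" using i by force
  qed
qed

lemma cr_closed:
  fixes f :: "'a::metric_space \<Rightarrow> 'a"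
  assumes "compact (UNIV :: 'a set)" and um: "ultrametric TYPE('a)"
    and "continuous_on UNIV f"
    and x: "x \<in> closure (chain_recurrent_set f)"
  shows "x \<in> chain_recurrent_set f"
  unfolding chain_recurrent_set_def
proof (intro CollectI allI impI)
  fix d :: real assume d: "d > 0"
  have "uniformly_continuous_on UNIV f"
    using assms compact_uniformly_continuous by blast
  then obtain e where e: "e > 0" "\<And>a b. dist a b < e \<Longrightarrow> dist (f a) (f b) < d"
    unfolding uniformly_continuous_on_def using d by (metis UNIV_I)
  obtain y where y: "y \<in> chain_recurrent_set f" "dist y x < min e d"
    using x e d unfolding closure_approachable by (metis min_less_iff_conj)
  obtain ys k where ys: "delta_chain f d ys k" "ys 0 = y" "ys k = y"
    using y(1) d unfolding chain_recurrent_set_def by blast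
  have k: "k \<ge> 1" "\<And>i. i<k \<Longrightarrow> dist (f (ys i)) (ys (Suc i)) \<le> d"
    using ys(1) unfolding delta_chain_def by auto
  have fxy: "dist (f x) (f y) \<le> d" using e(2)[of x y] y(2) by (simp add: dist_commute)
  have yx: "dist y x \<le> d" using y(2) by simp
  define xs where "xs = (\<lambda>j. if j = 0 \<or> j = k then x else ys j)"
  have "delta_chain f d xs k"
    unfolding delta_chain_def
  proof (intro conjI allI impI)
    show "1 \<le> k" using k by simp
    fix i assume i: "i < k"
    show "dist (f (xs i)) (xs (Suc i)) \<le> d"
    proof (cases "i = 0")
      case True
      then have a: "dist (f y) (ys (Suc 0)) \<le> d" using k(2)[of 0] i ys(2) by simp
      show ?thesis
      proof (cases "k = 1")
        case True
        have b: "dist (f y) y \<le> d" using a True ys by simp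
        have "dist (f x) x \<le> max (dist (f x) (f y)) (dist (f y) x)" by (rule um_le[OF um])
        moreover have "dist (f y) x \<le> max (dist (f y) y) (dist y x)" by (rule um_le[OF um])
        ultimately show ?thesis using \<open>i=0\<close> True xs_def fxy b yx by auto
      next
        case False
        have "dist (f x) (ys (Suc 0)) \<le> max (dist (f x) (f y)) (dist (f y) (ys (Suc 0)))"
          by (rule um_le[OF um])
        then show ?thesis using \<open>i=0\<close> False xs_def fxy a by auto
      qed
    next
      case False
      show ?thesis
      proof (cases "Suc i = k")
        case True
        have a: "dist (f (ys i)) y \<le> d" using k(2)[of i] i True ys(3) by simp
        have "dist (f (ys i)) x \<le> max (dist (f (ys i)) y) (dist y x)" by (rule um_le[OF um])
        then show ?thesis using False True xs_def a yx by auto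
      next
        case F2: False
        then show ?thesis using False xs_def k(2)[of i] i by auto
      qed
    qed
  qed
  moreover have "xs 0 = x" "xs k = x" unfolding xs_def by auto
  ultimately show "\<exists>xs k. delta_chain f d xs k \<and> xs 0 = x \<and> xs k = x" by blast
qed

lemma shadow_step:
  fixes f :: "'a::metric_space \<Rightarrow> 'a"
  assumes um: "ultrametric TYPE('a)"
    and sh: "\<And>d xs. 0 < d \<Longrightarrow> d \<le> d0 \<Longrightarrow> pseudo_orbit f d xs \<Longrightarrow> \<exists>x. shadows f (L * d) x xs"
    and ch: "delta_chain f d xs k" "xs 0 = xs k"
    and d: "0 < d" "d \<le> d0"
  shows "\<exists>z. dist z (xs 0) \<le> L * d \<and> dist ((f ^^ k) z) z \<le> L * d"
proof -
  obtain z where z: "shadows f (L * d) z (\<lambda>i. xs (i mod k))"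
    using sh[OF d chain_periodic_po[OF ch]] by blast
  have k: "k \<ge> 1" using ch unfolding delta_chain_def by auto
  have a: "dist z (xs 0) \<le> L * d" using z unfolding shadows_def by (metis funpow_0 mod_0)
  have b: "dist ((f ^^ k) z) (xs 0) \<le> L * d" using z k unfolding shadows_def by (metis mod_self)
  have "dist ((f ^^ k) z) z \<le> max (dist ((f ^^ k) z) (xs 0)) (dist (xs 0) z)" by (rule um_le[OF um])
  then show ?thesis using a b by (auto simp: dist_commute)
qed

lemma orbit_chain:
  assumes "k \<ge> 1" "dist ((f ^^ k) z) z \<le> d" "d \<ge> 0"
  shows "delta_chain f d (\<lambda>j. if j = k then z else (f ^^ j) z) k"
  unfolding delta_chain_def
proof (intro conjI allI impI)
  show "1 \<le> k" using assms by simp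
  fix i assume "i < k"
  then show "dist (f (if i = k then z else (f ^^ i) z)) (if Suc i = k then z else (f ^^ Suc i) z) \<le> d"
    using assms by (cases "Suc i = k") auto
qed

lemma cr_sub:
  fixes f :: "'a::metric_space \<Rightarrow> 'a"
  assumes cpt: "compact (UNIV :: 'a set)" and um: "ultrametric TYPE('a)"
    and cont: "continuous_on UNIV f"
    and cs: "contractive_shadowing f"
    and x: "x \<in> chain_recurrent_set f"
  shows "x \<in> closure (periodic_points f)"
  unfolding closure_approachable
proof (intro allI impI)
  fix eps :: real assume eps: "eps > 0"
  obtain L d0 where L: "0 < L" "L < 1" "0 < d0"
    and sh0: "\<And>d xs. 0 < d \<Longrightarrow> d \<le> d0 \<Longrightarrow> pseudo_orbit f d xs \<Longrightarrow> \<exists>x. shadows f (L * d) x xs"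
    using cs unfolding contractive_shadowing_def by blast
  define d where "d = min d0 (eps / 2)"
  have d: "0 < d" "d \<le> d0" "d \<le> eps / 2" using L eps unfolding d_def by auto
  obtain xs k where xs: "delta_chain f d xs k" "xs 0 = x" "xs k = x"
    using x d unfolding chain_recurrent_set_def by blast
  have k: "k \<ge> 1" using xs unfolding delta_chain_def by auto
  define P where "P = (\<lambda>n z. dist ((f ^^ k) z) z \<le> L ^ (n+1) * d \<and> dist z x \<le> L * d)"
  have P0: "\<exists>z. P 0 z"
    using shadow_step[OF um sh0 xs(1) _ d(1,2)] xs unfolding P_def by auto
  have PS: "\<exists>y. P (Suc n) y \<and> True" if "P n z" for z n
  proof -
    have pos: "0 < L ^ (n+1) * d" using L d by simp
    have Ln: "L ^ (n+1) \<le> 1" using power_le_one[of L "n+1"] L by linarith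
    have "L ^ (n+1) * d \<le> 1 * d" using mult_right_mono[OF Ln, of d] d by simp
    then have le: "L ^ (n+1) * d \<le> d0" using d by linarith
    have ch: "delta_chain f (L ^ (n+1) * d) (\<lambda>j. if j = k then z else (f ^^ j) z) k"
      using orbit_chain[OF k, of f z "L ^ (n+1) * d"] that pos unfolding P_def by auto
    obtain y where y: "dist y z \<le> L * (L ^ (n+1) * d)" "dist ((f ^^ k) y) y \<le> L * (L ^ (n+1) * d)"
      using shadow_step[OF um sh0 ch _ pos le] k by auto
    have "L * (L ^ (n+1) * d) \<le> L * d"
      using Ln L d by (simp add: mult_left_le_one_le)
    then have "dist y x \<le> L * d"
      using um_le[OF um, of y x z] y(1) that unfolding P_def by auto
    then show ?thesis using y(2) unfolding P_def by (auto simp: algebra_simps)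
  qed
  have "\<exists>zs. \<forall>n. P n (zs n) \<and> True"
    by (rule dependent_nat_choice[of P "\<lambda>_ _ _. True"]) (use P0 PS in auto)
  then obtain zs where zs: "\<And>n. P n (zs n)" by blast
  obtain p r where r: "strict_mono (r :: nat \<Rightarrow> nat)" "(zs \<circ> r) \<longlonglongrightarrow> p"
    using seq_compactE[OF compact_imp_seq_compact[OF cpt], of zs] by blast
  have contk: "continuous_on UNIV (f ^^ k)" using funpow_cont[OF cont] .
  have lim1: "(\<lambda>n. (f ^^ k) ((zs \<circ> r) n)) \<longlonglongrightarrow> (f ^^ k) p"
    using continuous_on_tendsto_compose[OF contk r(2)] by simp
  have lim2: "(\<lambda>n. dist ((f ^^ k) ((zs \<circ> r) n)) ((zs \<circ> r) n)) \<longlonglongrightarrow> dist ((f ^^ k) p) p"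
    by (rule tendsto_dist[OF lim1 r(2)])
  have g0: "(\<lambda>n. L ^ (n+1) * d) \<longlonglongrightarrow> 0"
  proof -
    have "(\<lambda>n. L ^ n) \<longlonglongrightarrow> 0" using L by (intro LIMSEQ_power_zero) auto
    then have "(\<lambda>n. L ^ Suc n) \<longlonglongrightarrow> 0" by (rule LIMSEQ_Suc)
    then show ?thesis using tendsto_mult_left_zero[of "\<lambda>n. L ^ Suc n" sequentially d] by simp
  qed
  have g1: "(\<lambda>n. L ^ (r n + 1) * d) \<longlonglongrightarrow> 0"
    using LIMSEQ_subseq_LIMSEQ[OF g0 r(1)] by (simp add: o_def)
  have lim3: "(\<lambda>n. dist ((f ^^ k) ((zs \<circ> r) n)) ((zs \<circ> r) n)) \<longlonglongrightarrow> 0"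
  proof (rule tendsto_sandwich[OF _ _ tendsto_const g1])
    show "\<forall>\<^sub>F n in sequentially. 0 \<le> dist ((f ^^ k) ((zs \<circ> r) n)) ((zs \<circ> r) n)" by simp
    show "\<forall>\<^sub>F n in sequentially. dist ((f ^^ k) ((zs \<circ> r) n)) ((zs \<circ> r) n) \<le> L ^ (r n + 1) * d"
      using zs unfolding P_def by simp
  qed
  have "dist ((f ^^ k) p) p = 0" using LIMSEQ_unique[OF lim2 lim3] .
  then have per: "p \<in> periodic_points f" proof -
    have "(f ^^ k) p = p" using \<open>dist ((f ^^ k) p) p = 0\<close> by simp
    moreover have "k \<in> {i. i > 0}" using k by simp
    ultimately show ?thesis unfolding periodic_points_def by blast
  qed
  have "dist p x \<le> L * d"
  proof (rule tendsto_le[OF _ tendsto_const])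
    show "((\<lambda>n. dist ((zs \<circ> r) n) x) \<longlongrightarrow> dist p x) sequentially"
      by (rule tendsto_dist[OF r(2) tendsto_const])
    show "\<forall>\<^sub>F n in sequentially. dist ((zs \<circ> r) n) x \<le> L * d" using zs unfolding P_def by simp
  qed simp
  moreover have "L * d < eps"
  proof -
    have "L * d < 1 * d" using L d by (intro mult_strict_right_mono) auto
    then show ?thesis using d eps by linarith
  qed
  ultimately show "\<exists>y\<in>periodic_points f. dist y x < eps" using per by force
qed

theorem theorem1p5:
  fixes f :: "'a::metric_space \<Rightarrow> 'a"
  assumes "compact (UNIV :: 'a set)"
    and "ultrametric TYPE('a)"
    and "continuous_on UNIV f"
    and "contractive_shadowing f"
  shows "chain_recurrent_set f = closure (periodic_points f)"
proof
  show "chain_recurrent_set f \<subseteq> closure (periodic_points f)"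
    using cr_sub[OF assms] by blast
  have "closure (periodic_points f) \<subseteq> closure (chain_recurrent_set f)"
    by (rule closure_mono) (use per_in_cr in blast)
  then show "closure (periodic_points f) \<subseteq> chain_recurrent_set f"
    using cr_closed[OF assms(1,2,3)] by blast
qed

end
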